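(* Fix an integer $k\ge2$ and let $\rho_k$ be the smallest positive real root of $1-4x+2^{k+1}x^{k+1}=0$. Then, as $n\to\infty$, $$f^{(n)}_k\sim \frac14\sqrt{\frac{4\rho_k-(k+1)2^{k+1}\rho_k^{k+1}}{\pi n^3}}\left(\frac{1}{\rho_k}\right)^{n},$$ where $f^{(n)}_k$ is the number of trees $t\in\mathcal{T}_n$ with $\gamma(t)\le k$, i.e. the coefficient of $x^n$ in $F^-_k(x)=\frac{1-\sqrt{1-4x+2^{k+1}x^{k+1}}}{2}$.
   Context: $\mathcal{T}_n$ is the set of ordered rooted binary trees (every internal node has exactly two ordered children) with $n$ leaves. A tree is a caterpillar if every node is either a leaf or has at least one leaf among its direct children. The subtree of $t$ at a node $v$ consists of $v$ and all its descendants, and $\gamma(t)$ is the largest number of leaves of a caterpillar occurring as the subtree of $t$ at some node. *)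

theory Defs
  imports Complex_Main "HOL-Library.Landau_Symbols"
begin

datatype btree = Leaf | Node btree btree

fun leaves :: "btree \<Rightarrow> nat" where
  "leaves Leaf = 1"
| "leaves (Node l r) = leaves l + leaves r"

fun subtrees :: "btree \<Rightarrow> btree set" where
  "subtrees Leaf = {Leaf}"
| "subtrees (Node l r) = insert (Node l r) (subtrees l \<union> subtrees r)"

fun caterpillar :: "btree \<Rightarrow> bool" where
  "caterpillar Leaf = True"
| "caterpillar (Node l r) = ((l = Leaf \<or> r = Leaf) \<and> caterpillar l \<and> caterpillar r)"

definition gamma :: "btree \<Rightarrow> nat" where
  "gamma t = Max (leaves ` {s \<in> subtrees t. caterpillar s})"

definition f_count :: "nat \<Rightarrow> nat \<Rightarrow> nat" where
  "f_count k n = card {t. leaves t = n \<and> gamma t \<le> k}"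

end

theory Submission
  imports Defs "HOL-Analysis.Analysis" "HOL-Computational_Algebra.Computational_Algebra" "HOL-Real_Asymp.Real_Asymp"
begin


lemma leaves_pos: "leaves t \<ge> 1"
  by (induction t) auto

lemma finite_subtrees: "finite (subtrees t)"
  by (induction t) auto

lemma self_in_subtrees: "t \<in> subtrees t"
  by (cases t) auto

lemma leaves_1: "leaves t = 1 \<longleftrightarrow> t = Leaf"
proof (cases t)
  case (Node l r)
  have "leaves l \<ge> 1" "leaves r \<ge> 1" by (rule leaves_pos)+
  then show ?thesis using Node by simp
qed simp

lemma Leaf_in_subtrees: "Leaf \<in> subtrees t"
  by (induction t) auto

lemma subtrees_leaves_le: "s \<in> subtrees t \<Longrightarrow> leaves s \<le> leaves t"
  by (induction t) auto

definition good :: "nat \<Rightarrow> btree \<Rightarrow> bool" where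
  "good k t = (\<forall>s\<in>subtrees t. caterpillar s \<longrightarrow> leaves s \<le> k)"

lemma gamma_le_iff: "gamma t \<le> k \<longleftrightarrow> good k t"
proof -
  have fin: "finite (leaves ` {s \<in> subtrees t. caterpillar s})"
    using finite_subtrees by auto
  have ne: "leaves ` {s \<in> subtrees t. caterpillar s} \<noteq> {}"
    using Leaf_in_subtrees[of t] by force
  show ?thesis unfolding gamma_def good_def
    using Max_le_iff[OF fin ne] by auto
qed

lemma good_Leaf: "k \<ge> 1 \<Longrightarrow> good k Leaf"
  by (auto simp: good_def)

lemma good_Node: "good k (Node l r) \<longleftrightarrow> good k l \<and> good k r \<and> \<not>(caterpillar (Node l r) \<and> leaves l + leaves r > k)"
  by (auto simp: good_def simp del: caterpillar.simps)

lemma good_cat_bound: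
  assumes "good k l" "good k r" "caterpillar (Node l r)"
  shows "leaves l + leaves r \<le> k + 1"
proof -
  have "l = Leaf \<or> r = Leaf" using assms(3) by simp
  moreover have "caterpillar l" "caterpillar r" using assms(3) by auto
  moreover have "leaves l \<le> k" using assms(1) \<open>caterpillar l\<close> self_in_subtrees[of l] by (auto simp: good_def)
  moreover have "leaves r \<le> k" using assms(2) \<open>caterpillar r\<close> self_in_subtrees[of r] by (auto simp: good_def)
  ultimately show ?thesis by auto
qed

lemma good_small: "leaves t \<le> k \<Longrightarrow> good k t"
  using subtrees_leaves_le by (auto simp: good_def) (meson le_trans)

definition TS :: "nat \<Rightarrow> btree set" where
  "TS n = {t. leaves t = n}"

lemma finite_TS: "finite (TS n)"
proof (induction n rule: less_induct)
  case (less n)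
  have "TS n \<subseteq> {Leaf} \<union> (\<Union>i<n. (\<lambda>(l,r). Node l r) ` (TS i \<times> TS (n - i)))"
  proof
    fix t assume "t \<in> TS n"
    then show "t \<in> {Leaf} \<union> (\<Union>i<n. (\<lambda>(l,r). Node l r) ` (TS i \<times> TS (n - i)))"
    proof (cases t)
      case (Node l r)
      then have "leaves l < n" "leaves r = n - leaves l" using \<open>t \<in> TS n\<close> leaves_pos[of r]
        by (auto simp: TS_def)
      then show ?thesis using Node by (auto simp: TS_def)
    qed auto
  qed
  moreover have "finite ({Leaf} \<union> (\<Union>i<n. (\<lambda>(l,r). Node l r) ` (TS i \<times> TS (n - i))))"
  proof -
    have T0: "TS 0 = {}" unfolding TS_def using leaves_pos by (auto simp: Suc_le_eq)
    have "finite ((\<lambda>(l,r). Node l r) ` (TS i \<times> TS (n - i)))" if "i < n" for i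
    proof (cases "i = 0")
      case True then show ?thesis using T0 by simp
    next
      case False then show ?thesis using less that by (auto intro!: finite_cartesian_product)
    qed
    then show ?thesis by auto
  qed
  ultimately show ?case by (rule finite_subset)
qed

definition CS :: "nat \<Rightarrow> btree set" where
  "CS n = {t. caterpillar t \<and> leaves t = n}"

lemma card_CS: assumes "2 \<le> m" shows "card (CS m) = 2 ^ (m - 2)"
  using assms
proof (induction m rule: nat_induct_at_least)
  case base
  have "CS 2 = {Node Leaf Leaf}"
  proof safe
    fix t assume "t \<in> CS 2"
    then show "t = Node Leaf Leaf"
    proof (cases t)
      case (Node l r)
      have "leaves l \<ge> 1" "leaves r \<ge> 1" by (rule leaves_pos)+
      then have "leaves l = 1" "leaves r = 1" using \<open>t \<in> CS 2\<close> Node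
        by (auto simp: CS_def)
      then have "l = Leaf" "r = Leaf" by (metis One_nat_def leaves_1)+
      then show ?thesis using Node by simp
    qed (auto simp: CS_def)
  qed (auto simp: CS_def)
  then show ?case by simp
next
  case (Suc m)
  have "CS (Suc m) = Node Leaf ` CS m \<union> (\<lambda>c. Node c Leaf) ` CS m"
  proof (intro equalityI subsetI)
    fix t assume "t \<in> CS (Suc m)"
    then show "t \<in> Node Leaf ` CS m \<union> (\<lambda>c. Node c Leaf) ` CS m"
    proof (cases t)
      case (Node l r)
      then show ?thesis using \<open>t \<in> CS (Suc m)\<close> by (auto simp: CS_def)
    qed (use Suc in \<open>auto simp: CS_def\<close>)
  qed (auto simp: CS_def)
  moreover have "Node Leaf ` CS m \<inter> (\<lambda>c. Node c Leaf) ` CS m = {}"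
    using Suc(1) by (auto simp: CS_def)
  moreover have "finite (CS m)" using finite_TS[of m] by (rule finite_subset[rotated]) (auto simp: CS_def TS_def)
  ultimately have "card (CS (Suc m)) = card (CS m) + card (CS m)"
    by (simp add: card_Un_disjoint card_image inj_on_def)
  moreover have "m - Suc 0 = Suc (m - 2)" using Suc(1) by arith
  ultimately show ?case using Suc(1,2) by simp
qed

definition GS :: "nat \<Rightarrow> nat \<Rightarrow> btree set" where
  "GS k n = {t. leaves t = n \<and> good k t}"

lemma f_count_GS: "f_count k n = card (GS k n)"
  by (simp add: f_count_def GS_def gamma_le_iff)

lemma finite_GS: "finite (GS k n)"
  using finite_TS[of n] by (rule finite_subset[rotated]) (auto simp: GS_def TS_def)

definition US :: "nat \<Rightarrow> nat \<Rightarrow> btree set" where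
  "US k n = (\<Union>i\<in>{1..n-1}. (\<lambda>(l,r). Node l r) ` (GS k i \<times> GS k (n - i)))"

lemma GS_eq:
  assumes "n \<ge> 2"
  shows "GS k n = US k n - (if n = k + 1 then CS n else {})"
proof safe
  fix t assume t: "t \<in> GS k n"
  then show "t \<in> US k n"
  proof (cases t)
    case Leaf then show ?thesis using t assms by (auto simp: GS_def)
  next
    case (Node l r)
    have "leaves l \<in> {1..n-1}" using t Node leaves_pos[of l] leaves_pos[of r] by (auto simp: GS_def)
    moreover have "l \<in> GS k (leaves l)" "r \<in> GS k (n - leaves l)" using t Node by (auto simp: GS_def good_Node)
    ultimately show ?thesis unfolding US_def using Node by blast
  qed
next
  fix t assume "t \<in> GS k n" "t \<in> (if n = k + 1 then CS n else {})"
  then show False using self_in_subtrees[of t] by (auto simp: GS_def CS_def good_def split: if_splits)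
next
  fix t assume t: "t \<in> US k n" "t \<notin> (if n = k + 1 then CS n else {})"
  then obtain l r i where lr: "t = Node l r" "i \<in> {1..n-1}" "l \<in> GS k i" "r \<in> GS k (n - i)"
    unfolding US_def by auto
  have ln: "leaves t = n" using lr by (auto simp: GS_def)
  have "good k l" "good k r" using lr by (auto simp: GS_def)
  moreover have "\<not>(caterpillar (Node l r) \<and> leaves l + leaves r > k)"
  proof
    assume c: "caterpillar (Node l r) \<and> leaves l + leaves r > k"
    then have "leaves l + leaves r \<le> k + 1" using good_cat_bound calculation by blast
    then have "n = k + 1" using c ln lr by simp
    then show False using t(2) c ln lr by (auto simp: CS_def)
  qed
  ultimately show "t \<in> GS k n" using ln lr by (simp add: GS_def good_Node)
qed

lemma CS_sub_US:
  assumes "k \<ge> 1"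
  shows "CS (k + 1) \<subseteq> US k (k + 1)"
proof
  fix t assume t: "t \<in> CS (k+1)"
  then show "t \<in> US k (k+1)"
  proof (cases t)
    case Leaf then show ?thesis using t assms by (auto simp: CS_def)
  next
    case (Node l r)
    have "leaves l \<in> {1..k}" using t Node leaves_pos[of l] leaves_pos[of r] by (auto simp: CS_def)
    moreover have "l \<in> GS k (leaves l)" "r \<in> GS k (k + 1 - leaves l)"
      using t Node leaves_pos[of l] leaves_pos[of r] by (auto simp: GS_def CS_def intro!: good_small)
    ultimately show ?thesis unfolding US_def using Node by force
  qed
qed

lemma card_US: "card (US k n) = (\<Sum>i=1..n-1. f_count k i * f_count k (n - i))"
  unfolding US_def f_count_GS
proof (subst card_UN_disjoint)
  show "finite {1..n-1}" by simp
  show "\<forall>i\<in>{1..n - 1}. finite ((\<lambda>(l, r). Node l r) ` (GS k i \<times> GS k (n - i)))"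
    using finite_GS by auto
  show "\<forall>i\<in>{1..n - 1}. \<forall>j\<in>{1..n - 1}. i \<noteq> j \<longrightarrow>
     (\<lambda>(l, r). Node l r) ` (GS k i \<times> GS k (n - i)) \<inter> (\<lambda>(l, r). Node l r) ` (GS k j \<times> GS k (n - j)) = {}"
    by (auto simp: GS_def)
  show "(\<Sum>i = 1..n - 1. card ((\<lambda>(l, r). Node l r) ` (GS k i \<times> GS k (n - i)))) =
    (\<Sum>i = 1..n - 1. card (GS k i) * card (GS k (n - i)))"
    by (intro sum.cong refl, subst card_image) (auto simp: inj_on_def card_cartesian_product)
qed

lemma f_count_0: "f_count k 0 = 0"
proof -
  have "GS k 0 = {}" using leaves_pos by (auto simp: GS_def Suc_le_eq)
  then show ?thesis by (simp add: f_count_GS)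
qed

lemma f_count_1: assumes k: "k \<ge> 1" shows "f_count k 1 = 1"
proof -
  have "GS k 1 = {Leaf}"
    unfolding GS_def using good_Leaf[OF k] leaves_1 by auto
  then show ?thesis by (simp add: f_count_GS)
qed

lemma f_count_rec:
  assumes "k \<ge> 2" "n \<ge> 2"
  shows "real (f_count k n) = (\<Sum>i=1..n-1. real (f_count k i) * real (f_count k (n - i)))
           - (if n = k + 1 then 2 ^ (k - 1) else 0)"
proof -
  have fU: "finite (US k n)" unfolding US_def using finite_GS by auto
  show ?thesis
  proof (cases "n = k + 1")
    case True
    have "card (GS k n) = card (US k n) - card (CS n)"
      using GS_eq[OF assms(2)] True CS_sub_US[of k] assms(1) fU
      by (simp add: card_Diff_subset finite_subset)
    moreover have "card (CS n) \<le> card (US k n)"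
      using CS_sub_US[of k] assms(1) fU True by (simp add: card_mono)
    moreover have "card (CS n) = 2 ^ (k - 1)" using card_CS[of n] True assms by simp
    ultimately have e: "f_count k n + 2^(k-1) = (\<Sum>i=1..n-1. f_count k i * f_count k (n - i))"
      using card_US[of k n] by (simp add: f_count_GS)
    have "real (f_count k n) + 2^(k-1) = (\<Sum>i=1..n-1. real (f_count k i) * real (f_count k (n - i)))"
      using arg_cong[OF e, of real] by simp
    then show ?thesis using True by simp
  next
    case False
    then have "GS k n = US k n" using GS_eq[OF assms(2)] by simp
    then have "f_count k n = (\<Sum>i=1..n-1. f_count k i * f_count k (n - i))"
      by (simp add: f_count_GS card_US)
    then show ?thesis using False by simp
  qed
qed


lemma half_gchoose_bound: "\<bar>(1/2::real) gchoose n\<bar> \<le> 1"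
proof (induction n)
  case (Suc k)
  have "real (Suc k) * ((1/2::real) gchoose Suc k) = (1/2 - real k) * ((1/2) gchoose k)"
    using gbinomial_mult_1[of "1/2::real" k] by (simp add: algebra_simps)
  then have "real (Suc k) * \<bar>(1/2::real) gchoose Suc k\<bar> = \<bar>1/2 - real k\<bar> * \<bar>(1/2) gchoose k\<bar>"
    by (metis abs_mult abs_of_nat)
  also have "\<dots> \<le> real (Suc k) * 1"
    using Suc by (intro mult_mono) auto
  finally show ?case by (simp only: mult_le_cancel_left_pos of_nat_0_less_iff zero_less_Suc)
qed simp

lemma one_gchoose: "(1::real) gchoose n = (if n \<le> 1 then 1 else 0)"
proof -
  have "(1::real) gchoose n = of_nat (1 choose n)" using binomial_gbinomial[of 1 n, where 'a=real] by simp
  then show ?thesis by (cases n) (auto simp: binomial_eq_0)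
qed

definition Bsq :: "complex \<Rightarrow> complex fps" where
  "Bsq c = Abs_fps (\<lambda>n. of_real ((1/2::real) gchoose n) * c^n)"

lemma Bsq_sq: "Bsq c * Bsq c = fps_of_poly [:1, c:]"
proof (rule fps_ext)
  fix n
  have "fps_nth ((Bsq c * Bsq c)) (n) = (\<Sum>i=0..n. of_real (((1/2::real) gchoose i) * ((1/2) gchoose (n - i))) * c^n)"
    unfolding fps_mult_nth Bsq_def
    by (intro sum.cong refl) (auto simp: power_add[symmetric])
  also have "\<dots> = of_real (\<Sum>i=0..n. ((1/2::real) gchoose i) * ((1/2) gchoose (n - i))) * c^n"
    by (simp add: sum_distrib_right)
  also have "\<dots> = of_real ((1::real) gchoose n) * c^n"
    using gbinomial_Vandermonde[of "1/2::real" "1/2" n] by simp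
  also have "\<dots> = fps_nth (fps_of_poly [:1, c:]) n"
    by (cases n) (auto simp: one_gchoose coeff_pCons split: nat.splits)
  finally show "fps_nth ((Bsq c * Bsq c)) (n) = fps_nth (fps_of_poly [:1, c:]) n" .
qed

lemma Bsq_bound: "cmod (fps_nth (Bsq c) n) \<le> cmod c ^ n"
proof -
  have "cmod (fps_nth (Bsq c) n) = \<bar>(1/2::real) gchoose n\<bar> * cmod c ^ n"
    by (simp add: Bsq_def norm_mult norm_power)
  also have "\<dots> \<le> 1 * cmod c ^ n" using half_gchoose_bound by (intro mult_right_mono) auto
  finally show ?thesis by simp
qed

lemma conv_bound:
  fixes f g :: "complex fps"
  assumes "\<And>n. cmod (fps_nth (f) (n)) \<le> (real n + 1) ^ d * r ^ n" "\<And>n. cmod (fps_nth (g) (n)) \<le> r ^ n" "r \<ge> 0"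
  shows "cmod (fps_nth ((f * g)) (n)) \<le> (real n + 1) ^ Suc d * r ^ n"
proof -
  have "cmod (fps_nth ((f * g)) (n)) \<le> (\<Sum>i=0..n. cmod (fps_nth (f) (i)) * cmod (fps_nth (g) ((n - i))))"
    unfolding fps_mult_nth by (rule order_trans[OF norm_sum]) (simp add: norm_mult)
  also have "\<dots> \<le> (\<Sum>i=0..n. (real n + 1) ^ d * r ^ n)"
  proof (rule sum_mono)
    fix i assume i: "i \<in> {0..n}"
    have "cmod (fps_nth (f) (i)) * cmod (fps_nth (g) ((n - i))) \<le> ((real i + 1) ^ d * r ^ i) * r ^ (n - i)"
      using assms by (intro mult_mono) auto
    also have "\<dots> \<le> ((real n + 1) ^ d * r ^ i) * r ^ (n - i)"
      using i assms(3) by (intro mult_right_mono power_mono) auto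
    also have "\<dots> = (real n + 1) ^ d * r ^ n"
      using i by (simp add: mult.assoc power_add[symmetric])
    finally show "cmod (fps_nth (f) (i)) * cmod (fps_nth (g) ((n - i))) \<le> (real n + 1) ^ d * r ^ n" .
  qed
  also have "\<dots> = (real n + 1) ^ Suc d * r ^ n" by simp
  finally show ?thesis .
qed

lemma sqrt_poly:
  fixes Q :: "complex poly" and R :: real
  assumes "R > 0" "poly Q 0 = 1" "\<And>z. poly Q z = 0 \<Longrightarrow> R < cmod z"
  shows "\<exists>T. T * T = fps_of_poly Q \<and> fps_nth (T) (0) = 1 \<and> (\<forall>n. cmod (fps_nth (T) (n)) \<le> (real n + 1) ^ degree Q * (1/R) ^ n)"
  using assms(2,3)
proof (induction "degree Q" arbitrary: Q)
  case 0
  obtain c where "Q = [:c:]" using 0(1) degree_eq_zeroE by metis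
  then have "Q = [:1:]" using 0(2) by simp
  then show ?case
    using assms(1) by (intro exI[of _ 1]) auto
next
  case (Suc m)
  have "\<not> constant (poly Q)" using Suc(2) constant_degree by (metis nat.distinct(1))
  then obtain r where r: "poly Q r = 0" using fundamental_theorem_of_algebra by blast
  have r0: "r \<noteq> 0" using r Suc(3) by auto
  have rR: "R < cmod r" using Suc(4) r by blast
  obtain Q1 where Q1: "Q = [:-r, 1:] * Q1" using r poly_eq_0_iff_dvd by (metis dvdE)
  define Q2 where "Q2 = smult (-r) Q1"
  have QQ2: "Q = [:1, -1/r:] * Q2"
    unfolding Q1 Q2_def using r0 by (simp add: field_simps smult_add_right)
  have Q2nz: "Q2 \<noteq> 0" using QQ2 Suc(3) by auto
  have "degree Q = degree [:1, -1/r:] + degree Q2"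
    unfolding QQ2 by (rule degree_mult_eq) (use r0 Q2nz in auto)
  then have degQ2: "degree Q2 = m" using Suc(2) r0 by simp
  have Q20: "poly Q2 0 = 1" using Suc(3) QQ2 by simp
  have Q2roots: "R < cmod z" if "poly Q2 z = 0" for z
    using Suc(4)[of z] that QQ2 by simp
  obtain T2 where T2: "T2 * T2 = fps_of_poly Q2" "fps_nth (T2) (0) = 1"
    "\<forall>n. cmod (fps_nth (T2) (n)) \<le> (real n + 1) ^ degree Q2 * (1/R) ^ n"
    using Suc(1)[OF degQ2[symmetric] Q20 Q2roots] by blast
  define T where "T = T2 * Bsq (-1/r)"
  have "T * T = (Bsq (-1/r) * Bsq (-1/r)) * (T2 * T2)"
    unfolding T_def by (simp add: algebra_simps)
  also have "\<dots> = fps_of_poly Q" unfolding Bsq_sq T2 QQ2 fps_of_poly_mult by simp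
  finally have TT: "T * T = fps_of_poly Q" .
  have T0: "fps_nth (T) (0) = 1" using T2 by (simp add: T_def Bsq_def)
  have Bb: "cmod (fps_nth (Bsq (-1/r)) n) \<le> (1/R) ^ n" for n
  proof -
    have "cmod (-1/r) \<le> 1/R" using rR assms(1) by (simp add: norm_divide frac_le)
    then show ?thesis using Bsq_bound[of "-1/r" n] by (meson norm_ge_zero order_trans power_mono)
  qed
  have "cmod (fps_nth (T) (n)) \<le> (real n + 1) ^ Suc m * (1/R) ^ n" for n
    unfolding T_def using T2(3) degQ2 Bb assms(1) by (intro conv_bound) auto
  then show ?case using TT T0 Suc(2) by auto
qed


lemma neg_half_not_nonpos_int: "(-1/2::real) \<notin> \<int>\<^sub>\<le>\<^sub>0"
proof
  assume "(-1/2::real) \<in> \<int>\<^sub>\<le>\<^sub>0"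
  then obtain m :: int where "(-1/2::real) = of_int m" by (auto elim: nonpos_Ints_cases)
  then have "(2::real) * of_int m = -1" by simp
  then have "2 * m = -1" by (metis of_int_eq_iff of_int_mult of_int_numeral of_int_minus of_int_1)
  then show False by presburger
qed

lemma Gamma_neg_half: "Gamma (-1/2::real) = - 2 * sqrt pi"
proof -
  have "Gamma (-1/2 + 1 :: real) = (-1/2) * Gamma (-1/2)"
    by (rule Gamma_plus1[OF neg_half_not_nonpos_int])
  then have "sqrt pi = (-1/2) * Gamma (-1/2::real)" using Gamma_one_half_real by simp
  then show ?thesis by simp
qed

lemma poch_neg_half_nz: "pochhammer (-1/2::real) n \<noteq> 0"
proof
  assume "pochhammer (-1/2::real) n = 0"
  then obtain k where "(-1/2::real) = - of_nat k" by (auto simp: pochhammer_eq_0_iff)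
  then have "(2::real) * of_nat k = 1" by simp
  then have "2 * k = 1" by (metis of_nat_1 of_nat_eq_iff of_nat_mult of_nat_numeral)
  then show False by presburger
qed

lemma b_asymp:
  "(\<lambda>n. real n powr (3/2) * (((1/2::real) gchoose n) * (-1)^n)) \<longlonglongrightarrow> - 1 / (2 * sqrt pi)"
proof -
  define z :: real where "z = -1/2"
  have lim: "(\<lambda>n. 1 / (Gamma_series z n * (1 + z / real n))) \<longlonglongrightarrow> 1 / (Gamma z * (1 + 0))"
    by (intro tendsto_intros Gamma_series_LIMSEQ tendsto_divide_0[OF tendsto_const] filterlim_real_sequentially)
       (auto simp: Gamma_eq_zero_iff z_def neg_half_not_nonpos_int)
  have eq: "real n powr (3/2) * (((1/2::real) gchoose n) * (-1)^n) = 1 / (Gamma_series z n * (1 + z / real n))"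
    if n: "n \<ge> 1" for n
  proof -
    have np: "real n > 0" using n by simp
    define P where "P = pochhammer z n"
    define F where "F = (fact n :: real)"
    define x where "x = real n powr (1/2)"
    define y where "y = real n powr z"
    have B: "((1/2::real) gchoose n) * (-1)^n = P / F"
      by (simp add: gbinomial_pochhammer z_def P_def F_def power_mult_distrib[symmetric])
    have G: "Gamma_series z n = F * y / (P * (z + real n))"
      using np by (simp add: Gamma_series_def pochhammer_Suc powr_def P_def F_def y_def)
    have zn: "z + real n \<noteq> 0" using n by (simp add: z_def)
    have Pnz: "P \<noteq> 0" using poch_neg_half_nz by (simp add: z_def P_def)
    have Fp: "F > 0" by (simp add: F_def)
    have yp: "y > 0" using np by (simp add: y_def)
    have x32: "real n powr (3/2) = real n * x"
    proof -
      have "real n powr (3/2) = real n powr (1 + 1/2)" by simp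
      also have "\<dots> = real n * real n powr (1/2)" using np by (simp only: powr_add powr_one)
      finally show ?thesis by (simp add: x_def)
    qed
    have xy: "x * y = 1"
      using np by (simp add: x_def y_def z_def powr_add[symmetric])
    have e1: "1 + z / real n = (z + real n) / real n" using np by (simp add: field_simps)
    have aux: "\<And>a b c d. (c::real) \<noteq> 0 \<Longrightarrow> a/(b*c) * (c/d) = a/(b*d)"
      by (simp add: divide_simps)
    have "Gamma_series z n * (1 + z / real n) = F * y / (P * real n)"
      unfolding G e1 using aux[OF zn] .
    then have "1 / (Gamma_series z n * (1 + z / real n)) = P * real n / (F * y)"
      by simp
    also have "\<dots> = P * real n * x / F"
      using xy yp Fp by (simp add: field_simps)
    also have "\<dots> = real n powr (3/2) * (((1/2::real) gchoose n) * (-1)^n)"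
      unfolding B x32 by simp
    finally show ?thesis by simp
  qed
  have "(\<lambda>n. real n powr (3/2) * (((1/2::real) gchoose n) * (-1)^n)) \<longlonglongrightarrow> 1 / (Gamma z * (1 + 0))"
    by (rule Lim_transform_eventually[OF lim]) (auto intro!: eventually_sequentiallyI[of 1] simp: eq)
  moreover have "Gamma z = - 2 * sqrt pi" unfolding z_def by (rule Gamma_neg_half)
  ultimately show ?thesis by simp
qed


lemma shifted_lim:
  fixes b :: "nat \<Rightarrow> real"
  assumes hb: "(\<lambda>n. real n powr (3/2) * b n) \<longlonglongrightarrow> L"
  shows "(\<lambda>n. real n powr (3/2) * b (n - i)) \<longlonglongrightarrow> L"
proof -
  have h1: "(\<lambda>n. real (n - i) powr (3/2) * b (n - i)) \<longlonglongrightarrow> L"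
    using filterlim_compose[OF hb filterlim_minus_const_nat_at_top[of i]] by (simp add: o_def)
  have r: "(\<lambda>n. real n / (real n - real i)) \<longlonglongrightarrow> 1"
    by real_asymp
  have h2: "(\<lambda>n. (real n / (real n - real i)) powr (3/2)) \<longlonglongrightarrow> 1 powr (3/2)"
    by (rule tendsto_powr[OF r tendsto_const]) simp
  have "(\<lambda>n. (real n / (real n - real i)) powr (3/2) * (real (n - i) powr (3/2) * b (n - i))) \<longlonglongrightarrow> 1 * L"
    using tendsto_mult[OF h2 h1] by simp
  moreover have "eventually (\<lambda>n. (real n / (real n - real i)) powr (3/2) * (real (n - i) powr (3/2) * b (n - i))
      = real n powr (3/2) * b (n - i)) sequentially"
  proof (rule eventually_sequentiallyI[of "i + 1"])
    fix n assume n: "i + 1 \<le> n"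
    then have pos: "real n - real i > 0" "real n > 0" by auto
    have "real (n - i) = real n - real i" using n by simp
    then show "(real n / (real n - real i)) powr (3/2) * (real (n - i) powr (3/2) * b (n - i))
      = real n powr (3/2) * b (n - i)"
      using pos by (simp add: powr_divide)
  qed
  ultimately show ?thesis by (simp add: Lim_transform_eventually)
qed

lemma transfer:
  fixes b v :: "nat \<Rightarrow> real"
  assumes hb: "(\<lambda>n. real n powr (3/2) * b n) \<longlonglongrightarrow> L"
    and hv: "\<And>n. \<bar>v n\<bar> \<le> C * \<theta>^n" and th: "0 < \<theta>" "\<theta> < 1"
  shows "(\<lambda>n. real n powr (3/2) * (\<Sum>i\<le>n. v i * b (n - i))) \<longlonglongrightarrow> (\<Sum>i. v i) * L"
proof -
  obtain H where H: "\<And>m. \<bar>real m powr (3/2) * b m\<bar> \<le> H"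
  proof -
    have "Bseq (\<lambda>n. real n powr (3/2) * b n)" using hb by (intro convergent_imp_Bseq convergentI)
    then obtain K where "\<forall>n. norm (real n powr (3/2) * b n) \<le> K" by (auto elim!: BseqE)
    then show ?thesis using that by auto
  qed
  define Bb where "Bb = max H \<bar>b 0\<bar>"
  have Bb: "\<bar>b m\<bar> \<le> Bb" for m
  proof (cases "m = 0")
    case False
    then have "real m powr (3/2) \<ge> 1" by (simp add: ge_one_powr_ge_zero)
    then have "\<bar>b m\<bar> \<le> \<bar>real m powr (3/2) * b m\<bar>"
      by (simp add: abs_mult mult_le_cancel_right1)
    then show ?thesis using H[of m] by (simp add: Bb_def)
  qed (simp add: Bb_def)
  have C0: "C \<ge> 0" using hv[of 0] by simp
  have sumv: "summable (\<lambda>i. C * \<theta>^i)" using th by (intro summable_mult summable_geometric) auto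
  have sumv_abs: "summable (\<lambda>i. \<bar>v i\<bar>)" by (rule summable_comparison_test'[OF sumv]) (use hv in auto)
  define s where "s n i = (if 2 * i \<le> n then v i * (real n powr (3/2) * b (n - i)) else 0)" for n i
  define w where "w i = \<bar>v i\<bar> * (2 powr (3/2) * \<bar>H\<bar>)" for i
  have sbound: "\<bar>s n i\<bar> \<le> w i" for n i
  proof (cases "2 * i \<le> n")
    case True
    have "real n \<le> 2 * real (n - i)" using True by simp
    then have "real n powr (3/2) \<le> (2 * real (n - i)) powr (3/2)" by (simp add: powr_mono2)
    also have "\<dots> = 2 powr (3/2) * real (n - i) powr (3/2)" by (simp add: powr_mult)
    finally have "\<bar>real n powr (3/2) * b (n - i)\<bar> \<le> 2 powr (3/2) * real (n - i) powr (3/2) * \<bar>b (n - i)\<bar>"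
      by (simp add: abs_mult mult_right_mono)
    also have "\<dots> \<le> 2 powr (3/2) * \<bar>H\<bar>"
      using H[of "n - i"] by (simp add: abs_mult mult.assoc)
    finally show ?thesis using True by (simp add: s_def w_def abs_mult mult_left_mono)
  qed (simp add: s_def w_def)
  have w_int: "integrable (count_space UNIV) w"
    unfolding integrable_count_space_nat_iff w_def using sumv_abs
    by (simp add: abs_mult summable_mult2)
  have slim: "(\<lambda>n. s n i) \<longlonglongrightarrow> v i * L" for i
  proof -
    have "(\<lambda>n. v i * (real n powr (3/2) * b (n - i))) \<longlonglongrightarrow> v i * L"
      by (intro tendsto_mult tendsto_const shifted_lim[OF hb])
    moreover have "eventually (\<lambda>n. v i * (real n powr (3/2) * b (n - i)) = s n i) sequentially"
      by (rule eventually_sequentiallyI[of "2 * i"]) (simp add: s_def)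
    ultimately show ?thesis by (rule Lim_transform_eventually)
  qed
  have DCT: "(\<lambda>n. integral\<^sup>L (count_space UNIV) (s n)) \<longlonglongrightarrow> integral\<^sup>L (count_space UNIV) (\<lambda>i. v i * L)"
    by (rule integral_dominated_convergence[where w = w]) (auto simp: w_int slim sbound)
  have int_lim: "integrable (count_space UNIV) (\<lambda>i. v i * L)"
    by (rule integrable_dominated_convergence[where w = w and s = s]) (auto simp: w_int slim sbound)
  have int_s: "integrable (count_space UNIV) (s n)" for n
    by (rule integrable_dominated_convergence2[where w = w and f = "\<lambda>i. v i * L"]) (auto simp: w_int slim sbound)
  have I1: "integral\<^sup>L (count_space UNIV) (s n) = (\<Sum>i\<le>n. s n i)" for n
  proof -
    have "integral\<^sup>L (count_space UNIV) (s n) = (\<Sum>i. s n i)" by (rule integral_count_space_nat[OF int_s])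
    also have "\<dots> = (\<Sum>i\<le>n. s n i)" by (rule suminf_finite) (auto simp: s_def)
    finally show ?thesis .
  qed
  have I2: "integral\<^sup>L (count_space UNIV) (\<lambda>i. v i * L) = (\<Sum>i. v i) * L"
    using integral_count_space_nat[OF int_lim] summable_rabs_cancel[OF sumv_abs] by (simp add: suminf_mult2)
  have part1: "(\<lambda>n. \<Sum>i\<le>n. s n i) \<longlonglongrightarrow> (\<Sum>i. v i) * L"
    using DCT unfolding I1 I2 .
  define r where "r n = (\<Sum>i\<le>n. (if 2 * i \<le> n then 0 else v i * (real n powr (3/2) * b (n - i))))" for n
  define q where "q = sqrt \<theta>"
  have q: "0 < q" "q < 1" using th by (auto simp: q_def)
  have rbound: "\<bar>r n\<bar> \<le> C * Bb * ((real n + 1) * real n powr (3/2) * q^n)" for n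
  proof -
    have "\<bar>r n\<bar> \<le> (\<Sum>i\<le>n. \<bar>if 2 * i \<le> n then 0 else v i * (real n powr (3/2) * b (n - i))\<bar>)"
      unfolding r_def by (rule sum_abs)
    also have "\<dots> \<le> (\<Sum>i\<le>n. C * Bb * (real n powr (3/2) * q^n))"
    proof (rule sum_mono)
      fix i assume "i \<in> {..n}"
      show "\<bar>if 2 * i \<le> n then 0 else v i * (real n powr (3/2) * b (n - i))\<bar> \<le> C * Bb * (real n powr (3/2) * q^n)"
      proof (cases "2 * i \<le> n")
        case False
        have "\<theta>^i = q^(2*i)" using th by (simp add: q_def power_mult)
        also have "\<dots> \<le> q^n" using False q by (intro power_decreasing) auto
        finally have tq: "\<theta>^i \<le> q^n" .
        have "\<bar>v i\<bar> \<le> C * q^n" using hv[of i] tq C0 by (meson mult_left_mono order_trans)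
        moreover have "Bb \<ge> 0" using Bb[of 0] by simp
        ultimately have "\<bar>v i\<bar> * \<bar>b (n - i)\<bar> \<le> C * q^n * Bb"
          using Bb[of "n-i"] by (intro mult_mono) auto
        then show ?thesis using False
          by (simp add: abs_mult) (smt (verit) mult.commute mult.left_commute mult_left_mono powr_ge_zero)
      qed (use C0 Bb[of 0] q in simp)
    qed
    also have "\<dots> = C * Bb * ((real n + 1) * real n powr (3/2) * q^n)" by simp
    finally show ?thesis .
  qed
  have "(\<lambda>n. (real n + 1) * real n powr (3/2) * q^n) \<longlonglongrightarrow> 0"
    using q by real_asymp
  then have "(\<lambda>n. C * Bb * ((real n + 1) * real n powr (3/2) * q^n)) \<longlonglongrightarrow> 0"
    by (simp add: tendsto_mult_right_zero)
  then have part2: "r \<longlonglongrightarrow> 0"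
    by (rule Lim_null_comparison[rotated]) (use rbound in auto)
  have "(\<lambda>n. (\<Sum>i\<le>n. s n i) + r n) \<longlonglongrightarrow> (\<Sum>i. v i) * L + 0"
    by (rule tendsto_add[OF part1 part2])
  moreover have "(\<Sum>i\<le>n. s n i) + r n = real n powr (3/2) * (\<Sum>i\<le>n. v i * b (n - i))" for n
    unfolding r_def s_def sum.distrib[symmetric] sum_distrib_left
    by (intro sum.cong) auto
  ultimately show ?thesis by simp
qed


lemma geom_partial: "(1 - w) * (\<Sum>j=1..k. w^j) = w - (w::'a::comm_ring_1)^(k+1)"
proof (induction k)
  case (Suc k)
  have "(1 - w) * (\<Sum>j=1..Suc k. w^j) = (1 - w) * (\<Sum>j=1..k. w^j) + (1 - w) * w^(Suc k)"
    by (simp add: distrib_left)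
  also have "\<dots> = w - w^(k+1) + (1 - w) * w^(Suc k)" using Suc by simp
  also have "\<dots> = w - w^(Suc k + 1)" by (simp add: algebra_simps)
  finally show ?case .
qed simp

lemma rho_facts:
  fixes k :: nat and \<rho> :: real
  assumes k: "k \<ge> 2" and rp: "\<rho> > 0"
    and hP: "1 - 4 * \<rho> + 2 ^ (k + 1) * \<rho> ^ (k + 1) = 0"
    and hmin: "\<And>y::real. 0 < y \<Longrightarrow> y < \<rho> \<Longrightarrow> 1 - 4 * y + 2 ^ (k + 1) * y ^ (k + 1) \<noteq> 0"
  shows "\<rho> < 1/2" "(\<Sum>j=1..k. (2*\<rho>)^j) = 1"
    "4 * \<rho> - real (k + 1) * 2 ^ (k + 1) * \<rho> ^ (k + 1) > 0"
proof -
  define g where "g y = 1 - 4 * y + 2 ^ (k + 1) * y ^ (k + 1)" for y :: real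
  have g0: "g 0 = 1" by (simp add: g_def)
  have "(7/10::real) ^ (k + 1) \<le> (7/10) ^ 3" using k by (intro power_decreasing) auto
  moreover have "g (7/20) = 1 - 7/5 + (7/10::real) ^ (k + 1)"
    by (simp add: g_def power_mult_distrib[symmetric])
  moreover have "(7/10::real) ^ 3 = 343/1000" by (simp add: eval_nat_numeral)
  ultimately have g1: "g (7/20) \<le> 0" by linarith
  have "\<exists>x. 0 \<le> x \<and> x \<le> 7/20 \<and> g x = 0"
  proof (rule IVT2[of g "7/20" 0 0])
    show "\<forall>x. 0 \<le> x \<and> x \<le> 7 / 20 \<longrightarrow> isCont g x" unfolding g_def by (auto intro!: continuous_intros)
  qed (use g0 g1 in auto)
  then obtain x where x: "0 \<le> x" "x \<le> 7/20" "g x = 0" by blast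
  have "x \<noteq> 0" using x g0 by auto
  then have "\<rho> \<le> x" using hmin[of x] x by (force simp: g_def)
  then show r12: "\<rho> < 1/2" using x by simp
  define \<sigma> where "\<sigma> = 2 * \<rho>"
  have s: "0 < \<sigma>" "\<sigma> < 1" using rp r12 by (auto simp: \<sigma>_def)
  have e: "\<sigma>^(k+1) = 2^(k+1)*\<rho>^(k+1)" unfolding \<sigma>_def by (rule power_mult_distrib)
  have sk: "\<sigma> ^ (k + 1) = 2 * \<sigma> - 1"
    using e hP unfolding \<sigma>_def by linarith
  have "(1 - \<sigma>) * (\<Sum>j=1..k. \<sigma>^j) = (1 - \<sigma>) * 1"
    using geom_partial[of \<sigma> k] sk by simp
  then show S1: "(\<Sum>j=1..k. (2*\<rho>)^j) = 1" using s unfolding \<sigma>_def by simp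
  have "(\<Sum>j=1..k. \<sigma>^k) \<le> (\<Sum>j=1..k. \<sigma>^j)"
    using s by (intro sum_mono power_decreasing) auto
  then have "real k * \<sigma>^k \<le> 1" using S1 by (simp add: \<sigma>_def)
  moreover have "\<sigma> ^ (k+1) < \<sigma> ^ k" using s by simp
  ultimately have "real k * \<sigma> ^ (k+1) < 1" using k
    by (smt (verit, best) mult_strict_left_mono of_nat_0_less_iff zero_less_numeral le_less_trans order_less_le_trans)
  moreover have "4 * \<rho> - real (k + 1) * 2 ^ (k + 1) * \<rho> ^ (k + 1) = 1 - real k * \<sigma> ^ (k+1)"
    using sk by (simp add: \<sigma>_def power_mult_distrib algebra_simps)
  ultimately show "4 * \<rho> - real (k + 1) * 2 ^ (k + 1) * \<rho> ^ (k + 1) > 0" by simp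
qed

lemma root_small:
  fixes k :: nat and \<rho> :: real and z :: complex
  assumes k: "k \<ge> 2" and rp: "\<rho> > 0" and r12: "\<rho> < 1/2" and S1: "(\<Sum>j=1..k. (2*\<rho>)^j) = 1"
    and hz: "1 - 4 * z + 2 ^ (k + 1) * z ^ (k + 1) = 0" and zr: "cmod z \<le> \<rho>"
  shows "z = of_real \<rho>"
proof -
  define w where "w = 2 * z"
  define \<sigma> where "\<sigma> = 2 * \<rho>"
  have wn: "cmod w \<le> \<sigma>" using zr by (simp add: w_def \<sigma>_def norm_mult)
  have "(2*z)^(k+1) = 2^(k+1)*z^(k+1)" by (rule power_mult_distrib)
  then have E: "1 - 2 * w + w ^ (k + 1) = 1 - 4 * z + 2 ^ (k + 1) * z ^ (k + 1)" unfolding w_def by simp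
  have "1 - 2 * w + w ^ (k + 1) = 0" using trans[OF E hz] .
  have "(1 - w) * (1 - (\<Sum>j=1..k. w^j)) = (1 - w) - (1 - w) * (\<Sum>j=1..k. w^j)"
    by (simp add: algebra_simps)
  also have "\<dots> = (1 - w) - (w - w^(k+1))" using geom_partial[of w k] by simp
  also have "\<dots> = 1 - 2 * w + w ^ (k + 1)" by (simp add: algebra_simps)
  finally have "(1 - w) * (1 - (\<Sum>j=1..k. w^j)) = 0" using \<open>1 - 2 * w + w ^ (k + 1) = 0\<close> by simp
  moreover have "w \<noteq> 1" using wn r12 by (auto simp: \<sigma>_def)
  ultimately have Sw: "(\<Sum>j=1..k. w^j) = 1" by simp
  have "(\<Sum>j=1..k. Re (w^j)) = 1" using arg_cong[OF Sw, of Re] by (simp add: Re_sum)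
  then have "(\<Sum>j=1..k. (\<sigma>^j - Re (w^j))) = 0" using S1 by (simp add: sum_subtractf \<sigma>_def)
  moreover have "\<forall>j\<in>{1..k}. \<sigma>^j - Re (w^j) \<ge> 0"
  proof
    fix j
    have "Re (w^j) \<le> cmod (w^j)" by (rule complex_Re_le_cmod)
    also have "\<dots> = cmod w ^ j" by (simp add: norm_power)
    also have "\<dots> \<le> \<sigma> ^ j" using wn by (intro power_mono) auto
    finally show "\<sigma>^j - Re (w^j) \<ge> 0" by simp
  qed
  ultimately have all0: "\<forall>j\<in>{1..k}. \<sigma>^j - Re (w^j) = 0"
    using sum_nonneg_eq_0_iff[of "{1..k}" "\<lambda>j. \<sigma>^j - Re (w^j)"] by auto
  have "(1::nat) \<in> {1..k}" using k by simp
  with all0 have "\<sigma>^1 - Re (w^1) = 0" by blast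
  then have Rw: "Re w = \<sigma>" by simp
  have "(Re w)^2 + (Im w)^2 \<le> \<sigma>^2"
    using wn by (metis cmod_power2 norm_ge_zero power_mono)
  then have "Im w = 0" using Rw by simp
  then have "w = of_real \<sigma>" using Rw by (simp add: complex_eq_iff)
  then show ?thesis by (simp add: w_def \<sigma>_def)
qed


lemma sum_reflect: "(\<Sum>i\<le>(n::nat). g i) = (\<Sum>i\<le>n. g (n - i))"
  by (rule sum.reindex_bij_witness[of _ "\<lambda>i. n - i" "\<lambda>i. n - i"]) auto

lemma fps_sqrt_unique:
  fixes A B :: "complex fps"
  assumes "A * A = B * B" "fps_nth (A) (0) = 1" "fps_nth (B) (0) = 1"
  shows "A = B"
proof -
  have "(A - B) * (A + B) = 0" using assms(1) by (simp add: algebra_simps)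
  moreover have "A + B \<noteq> 0"
  proof
    assume "A + B = 0"
    then have "fps_nth ((A + B)) (0) = 0" by simp
    then show False using assms(2,3) by simp
  qed
  ultimately show ?thesis by simp
qed

theorem mainTheorem5:
  fixes k :: nat and \<rho> :: real
  assumes "k \<ge> 2"
    and "\<rho> > 0"
    and "1 - 4 * \<rho> + 2 ^ (k + 1) * \<rho> ^ (k + 1) = 0"
    and "\<And>y::real. 0 < y \<Longrightarrow> y < \<rho> \<Longrightarrow> 1 - 4 * y + 2 ^ (k + 1) * y ^ (k + 1) \<noteq> 0"
  shows "(\<lambda>n. real (f_count k n)) \<sim>[at_top]
    (\<lambda>n. 1 / 4 * sqrt ((4 * \<rho> - real (k + 1) * 2 ^ (k + 1) * \<rho> ^ (k + 1)) / (pi * real n ^ 3))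
          * (1 / \<rho>) ^ n)"
proof -
  note k = assms(1) and rp = assms(2) and hP = assms(3)
  note facts = rho_facts[OF assms]
  define K where "K = 4 * \<rho> - real (k + 1) * 2 ^ (k + 1) * \<rho> ^ (k + 1)"
  have Kpos: "K > 0" using facts(3) by (simp add: K_def)
  define \<rho>c :: complex where "\<rho>c = of_real \<rho>"
  have rc0: "\<rho>c \<noteq> 0" using rp by (simp add: \<rho>c_def)
  define Pc :: "complex poly" where "Pc = [:1, -4:] + monom (2^(k+1)) (k+1)"
  define Qc :: "complex poly" where
    "Qc = [:4 * \<rho>c:] - smult (2^(k+1) * \<rho>c) (\<Sum>i<k+1. monom (\<rho>c^(k-i)) i)"
  have polyQ: "poly Qc x = 4 * \<rho>c - 2^(k+1) * \<rho>c * (\<Sum>i<k+1. \<rho>c^(k-i) * x^i)" for x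
    by (simp add: Qc_def poly_sum poly_monom)
  have polyP: "poly Pc x = 1 - 4 * x + 2^(k+1) * x^(k+1)" for x
    by (simp add: Pc_def poly_monom)
  have hPc: "4 * \<rho>c - 2^(k+1) * \<rho>c^(k+1) = 1"
  proof -
    have hr: "4 * \<rho> - 2^(k+1) * \<rho>^(k+1) = 1" using hP by linarith
    have "complex_of_real (4 * \<rho> - 2^(k+1) * \<rho>^(k+1)) = 4 * \<rho>c - 2^(k+1) * \<rho>c^(k+1)"
      by (simp add: \<rho>c_def)
    then show ?thesis unfolding hr by simp
  qed
  have factor: "Pc = [:1, -1/\<rho>c:] * Qc"
  proof -
    have "poly Pc x = poly ([:1, -1/\<rho>c:] * Qc) x" for x
    proof -
      define S where "S = (\<Sum>i<k+1. \<rho>c^(k-i) * x^i)"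
      have diff: "x^(k+1) - \<rho>c^(k+1) = (x - \<rho>c) * S"
        unfolding S_def power_diff_sumr2 by simp
      have pq: "poly Qc x = 4 * \<rho>c - 2^(k+1) * \<rho>c * S" unfolding S_def by (rule polyQ)
      have pl: "poly [:1, -1/\<rho>c:] x = 1 - x / \<rho>c" by simp
      have "poly ([:1, -1/\<rho>c:] * Qc) x = (1 - x / \<rho>c) * (4 * \<rho>c - 2^(k+1) * \<rho>c * S)"
        unfolding poly_mult pq pl ..
      also have "\<dots> = 4 * \<rho>c - 4 * x - 2^(k+1) * ((\<rho>c - x) * S)"
        using rc0 by (simp add: field_simps)
      also have "\<dots> = 4 * \<rho>c - 4 * x + 2^(k+1) * (x^(k+1) - \<rho>c^(k+1))"
        unfolding diff by (simp add: algebra_simps)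
      also have "\<dots> = (4 * \<rho>c - 2^(k+1) * \<rho>c^(k+1)) - 4 * x + 2^(k+1) * x^(k+1)"
        by (simp add: algebra_simps)
      also have "\<dots> = poly Pc x" unfolding hPc polyP by simp
      finally show ?thesis by simp
    qed
    then show ?thesis using poly_eq_poly_eq_iff by blast
  qed
  have Qrho: "poly Qc \<rho>c = of_real K"
  proof -
    have "(\<Sum>i<k+1. \<rho>c^(k-i) * \<rho>c^i) = (\<Sum>i<k+1. \<rho>c^k)"
      by (intro sum.cong refl) (simp add: power_add[symmetric])
    then have "poly Qc \<rho>c = 4 * \<rho>c - 2^(k+1) * of_nat (k+1) * \<rho>c^(k+1)"
      by (simp add: polyQ)
    then show ?thesis by (simp add: K_def \<rho>c_def)
  qed
  have Q0: "poly Qc 0 = 1"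
  proof -
    have "(\<Sum>i<k+1. \<rho>c^(k-i) * (0::complex)^i) = (\<Sum>i\<in>{0}. \<rho>c^(k-i) * (0::complex)^i)"
      by (rule sum.mono_neutral_right) auto
    then have "poly Qc 0 = 4 * \<rho>c - 2^(k+1) * \<rho>c^(k+1)" by (simp add: polyQ)
    then show ?thesis using hPc by simp
  qed
  have Qnz: "Qc \<noteq> 0" using Q0 by auto
  have roots: "\<rho> < cmod z" if "poly Qc z = 0" for z
  proof (rule ccontr)
    assume "\<not> \<rho> < cmod z"
    moreover have "1 - 4 * z + 2 ^ (k + 1) * z ^ (k + 1) = 0"
      using that factor polyP[of z] by simp
    ultimately have "z = \<rho>c" using root_small[OF k rp facts(1,2)] by (simp add: \<rho>c_def)
    then show False using that Qrho Kpos by simp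
  qed
  obtain R where R: "\<rho> < R" "\<And>z. poly Qc z = 0 \<Longrightarrow> R < cmod z"
  proof -
    define Rts where "Rts = {z. poly Qc z = 0}"
    have fin: "finite Rts" unfolding Rts_def using poly_roots_finite[OF Qnz] .
    define m where "m = Min (insert (2 * \<rho>) (cmod ` Rts))"
    have "m > \<rho>" unfolding m_def using fin rp roots by (auto simp: Rts_def)
    moreover have "cmod z \<ge> m" if "poly Qc z = 0" for z
      unfolding m_def using fin that by (auto simp: Rts_def)
    ultimately show ?thesis by (intro that[of "(\<rho> + m) / 2"]) force+
  qed
  have Rp: "R > 0" using R rp by simp
  obtain T where T: "T * T = fps_of_poly Qc" "fps_nth (T) (0) = 1"
    "\<And>n. cmod (fps_nth (T) (n)) \<le> (real n + 1) ^ degree Qc * (1/R) ^ n"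
    using sqrt_poly[OF Rp Q0 R(2)] by blast
  define d where "d = degree Qc"
  define sseq where "sseq n = (if n = 0 then 1 else - 2 * real (f_count k n))" for n
  define pc where "pc n = (if n = 0 then 1 else if n = 1 then -4 else (0::real))
      + (if n = k + 1 then 2^(k+1) else 0)" for n
  have coeffP: "coeff Pc n = of_real (pc n)" for n
    by (simp add: Pc_def pc_def coeff_monom coeff_pCons split: nat.splits)
  have conv_s: "(\<Sum>i=0..n. sseq i * sseq (n - i)) = pc n" for n
  proof (cases "n \<le> 1")
    case True
    then consider "n = 0" | "n = 1" by linarith
    then show ?thesis
    proof cases
      case 1 then show ?thesis by (simp add: sseq_def pc_def)
    next
      case 2 then show ?thesis using f_count_1[of k] k by (simp add: sseq_def pc_def)
    qed
  next
    case False
    then obtain m where m: "n = Suc m" "m \<ge> 1" by (metis Suc_pred' not_le less_one neq0_conv le_simps(3))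
    have "(\<Sum>i=0..n. sseq i * sseq (n - i)) = sseq n * sseq 0 + (sseq 0 * sseq n + (\<Sum>i=1..m. sseq i * sseq (n - i)))"
      unfolding m(1) sum.atLeast0_atMost_Suc using sum.atLeast_Suc_atMost[of 0 m "\<lambda>i. sseq i * sseq (Suc m - i)"]
      by simp
    also have "(\<Sum>i=1..m. sseq i * sseq (n - i)) = 4 * (\<Sum>i=1..m. real (f_count k i) * real (f_count k (n - i)))"
      unfolding sum_distrib_left using m by (intro sum.cong refl) (auto simp: sseq_def)
    also have "(\<Sum>i=1..m. real (f_count k i) * real (f_count k (n - i))) = real (f_count k n) + (if n = k + 1 then 2 ^ (k - 1) else 0)"
      using f_count_rec[OF k, of n] m by simp
    finally have "(\<Sum>i=0..n. sseq i * sseq (n - i)) = 4 * (if n = k + 1 then 2 ^ (k - 1) else 0)"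
      using m by (simp add: sseq_def)
    moreover have "(4::real) * 2 ^ (k - 1) = 2 ^ (k + 1)"
    proof -
      have "k + 1 = Suc (Suc (k - 1))" using k by simp
      then show ?thesis by (simp only: power_Suc)
    qed
    ultimately show ?thesis using m by (simp add: pc_def)
  qed
  define S1 where "S1 = Abs_fps (\<lambda>n. complex_of_real (sseq n))"
  have S1sq: "S1 * S1 = fps_of_poly Pc"
  proof (rule fps_ext)
    fix n
    have "fps_nth ((S1 * S1)) (n) = of_real (\<Sum>i=0..n. sseq i * sseq (n - i))"
      by (simp add: S1_def fps_mult_nth)
    then show "fps_nth ((S1 * S1)) (n) = fps_nth (fps_of_poly Pc) n" by (simp add: conv_s coeffP)
  qed
  define S2 where "S2 = Bsq (-1/\<rho>c) * T"
  have S2sq: "S2 * S2 = fps_of_poly Pc"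
  proof -
    have "S2 * S2 = (Bsq (-1/\<rho>c) * Bsq (-1/\<rho>c)) * (T * T)" by (simp add: S2_def algebra_simps)
    also have "\<dots> = fps_of_poly Pc" unfolding Bsq_sq T(1) factor fps_of_poly_mult by simp
    finally show ?thesis .
  qed
  have S12: "S1 = S2"
    by (rule fps_sqrt_unique) (use S1sq S2sq T(2) in \<open>auto simp: S1_def S2_def sseq_def Bsq_def\<close>)
  define t where "t n = Re (fps_nth (T) (n))" for n
  define a where "a n = ((1/2::real) gchoose n) * (-1/\<rho>)^n" for n
  have Bsq_nth: "fps_nth (Bsq (-1/\<rho>c)) n = of_real (a n)" for n
    by (simp add: Bsq_def a_def \<rho>c_def)
  have s_conv: "sseq n = (\<Sum>i\<le>n. a i * t (n - i))" for n
  proof -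
    have "complex_of_real (sseq n) = fps_nth S1 n" by (simp add: S1_def)
    also have "\<dots> = fps_nth (S2) (n)" using S12 by simp
    also have "\<dots> = (\<Sum>i\<le>n. of_real (a i) * fps_nth (T) ((n - i)))"
      unfolding S2_def fps_mult_nth atLeast0AtMost Bsq_nth ..
    finally have "sseq n = Re (\<Sum>i\<le>n. of_real (a i) * fps_nth (T) ((n - i)))"
      by (metis Re_complex_of_real)
    then show ?thesis by (simp add: Re_sum t_def)
  qed
  define b where "b m = ((1/2::real) gchoose m) * (-1)^m" for m
  define v where "v i = t i * \<rho>^i" for i
  have sv: "sseq n * \<rho>^n = (\<Sum>i\<le>n. v i * b (n - i))" for n
  proof -
    have "sseq n * \<rho>^n = (\<Sum>i\<le>n. (a i * \<rho>^i) * (t (n - i) * \<rho>^(n - i)))"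
      unfolding s_conv sum_distrib_right
      by (intro sum.cong refl) (simp add: power_add[symmetric] algebra_simps)
    also have "\<dots> = (\<Sum>i\<le>n. b i * v (n - i))"
    proof (intro sum.cong refl)
      fix i
      have e: "(-1/\<rho>) * \<rho> = -1" using rp by simp
      have "a i * \<rho>^i = ((1/2::real) gchoose i) * ((-1/\<rho>) * \<rho>)^i"
        by (simp only: a_def power_mult_distrib mult.assoc)
      also have "\<dots> = b i" unfolding e b_def ..
      finally show "(a i * \<rho>^i) * (t (n - i) * \<rho>^(n - i)) = b i * v (n - i)" by (simp add: v_def)
    qed
    also have "\<dots> = (\<Sum>i\<le>n. v i * b (n - i))"
      by (subst sum_reflect) (simp add: mult.commute)
    finally show ?thesis .
  qed
  define \<theta> where "\<theta> = sqrt (\<rho> / R)"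
  have th: "0 < \<theta>" "\<theta> < 1" using R rp by (auto simp: \<theta>_def)
  have "(\<lambda>i. (real i + 1) ^ d * \<theta> ^ i) \<longlonglongrightarrow> 0" using th by real_asymp
  then obtain C where C: "\<And>i. (real i + 1) ^ d * \<theta> ^ i \<le> C"
  proof -
    have "Bseq (\<lambda>i. (real i + 1) ^ d * \<theta> ^ i)"
      using \<open>(\<lambda>i. (real i + 1) ^ d * \<theta> ^ i) \<longlonglongrightarrow> 0\<close> by (intro convergent_imp_Bseq convergentI)
    then obtain C where "\<forall>n. norm ((real n + 1) ^ d * \<theta> ^ n) \<le> C" by (auto elim!: BseqE)
    then have "\<And>i. (real i + 1) ^ d * \<theta> ^ i \<le> C" by (metis abs_ge_self order_trans real_norm_def)
    then show ?thesis using that by blast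
  qed
  have Tbound: "cmod (fps_nth (T) (i)) * \<rho>^i \<le> C * \<theta>^i" for i
  proof -
    have "cmod (fps_nth (T) (i)) * \<rho>^i \<le> (real i + 1) ^ d * (1/R)^i * \<rho>^i"
      using T(3)[of i] rp by (intro mult_right_mono) (auto simp: d_def)
    also have "\<dots> = ((real i + 1) ^ d * \<theta>^i) * \<theta>^i"
    proof -
      have "\<theta>^i * \<theta>^i = (\<rho>/R)^i" using R rp by (simp add: \<theta>_def power_mult_distrib[symmetric])
      then show ?thesis by (simp add: power_divide mult.assoc)
    qed
    also have "\<dots> \<le> C * \<theta>^i" using C[of i] th by (intro mult_right_mono) auto
    finally show ?thesis .
  qed
  have vbound: "\<bar>v i\<bar> \<le> C * \<theta>^i" for i
  proof -
    have "\<bar>v i\<bar> \<le> cmod (fps_nth (T) (i)) * \<rho>^i"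
      using abs_Re_le_cmod[of "fps_nth (T) (i)"] rp by (simp add: v_def t_def abs_mult)
    then show ?thesis using Tbound[of i] by simp
  qed
  define L where "L = - 1 / (2 * sqrt pi)"
  define V where "V = (\<Sum>i. v i)"
  have lim: "(\<lambda>n. real n powr (3/2) * (sseq n * \<rho>^n)) \<longlonglongrightarrow> V * L"
    unfolding sv V_def L_def
    by (rule transfer[OF _ vbound th]) (use b_asymp in \<open>simp add: b_def\<close>)
  define Z where "Z = (\<Sum>i. fps_nth (T) (i) * \<rho>c^i)"
  have sumZ: "summable (\<lambda>i. norm (fps_nth (T) (i) * \<rho>c^i))"
  proof (rule summable_comparison_test')
    show "summable (\<lambda>i. C * \<theta>^i)" using th by (intro summable_mult summable_geometric) auto
    show "norm (norm (fps_nth (T) (i) * \<rho>c ^ i)) \<le> C * \<theta> ^ i" for i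
      using Tbound[of i] rp by (simp add: norm_mult norm_power \<rho>c_def)
  qed
  have "Z * Z = (\<Sum>n. \<Sum>i\<le>n. (fps_nth (T) (i) * \<rho>c^i) * (fps_nth (T) ((n - i)) * \<rho>c^(n - i)))"
    unfolding Z_def by (rule Cauchy_product[OF sumZ sumZ])
  also have "\<dots> = (\<Sum>n. coeff Qc n * \<rho>c^n)"
  proof (intro suminf_cong)
    fix n
    have "(\<Sum>i\<le>n. (fps_nth (T) (i) * \<rho>c^i) * (fps_nth (T) ((n - i)) * \<rho>c^(n - i))) = (\<Sum>i\<le>n. fps_nth (T) (i) * fps_nth (T) ((n - i))) * \<rho>c^n"
      unfolding sum_distrib_right by (intro sum.cong refl) (simp add: power_add[symmetric] algebra_simps)
    also have "\<dots> = coeff Qc n * \<rho>c^n"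
      using arg_cong[OF T(1), of "\<lambda>F. fps_nth (F) (n)"] by (simp add: fps_mult_nth atLeast0AtMost)
    finally show "(\<Sum>i\<le>n. (fps_nth (T) (i) * \<rho>c^i) * (fps_nth (T) ((n - i)) * \<rho>c^(n - i))) = coeff Qc n * \<rho>c^n" .
  qed
  also have "\<dots> = (\<Sum>n\<le>degree Qc. coeff Qc n * \<rho>c^n)"
    by (rule suminf_finite) (auto simp: coeff_eq_0)
  also have "\<dots> = of_real K" using Qrho by (simp add: poly_altdef)
  finally have ZZ: "Z * Z = of_real K" .
  have "Im Z = 0"
  proof (rule ccontr)
    assume "Im Z \<noteq> 0"
    moreover have "2 * Re Z * Im Z = 0" using arg_cong[OF ZZ, of Im] by auto
    ultimately have "Re Z = 0" by auto
    then have "-((Im Z)^2) = K" using arg_cong[OF ZZ, of Re] by (simp add: power2_eq_square)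
    then show False using Kpos by (smt (verit) zero_le_power2)
  qed
  moreover have "V = Re Z"
  proof -
    have "Re Z = (\<Sum>i. Re (fps_nth (T) (i) * \<rho>c^i))"
      unfolding Z_def using summable_norm_cancel[OF sumZ] by (simp add: Re_suminf)
    also have "\<dots> = V" unfolding V_def v_def t_def \<rho>c_def
      by (simp flip: of_real_power)
    finally show ?thesis by simp
  qed
  ultimately have V2: "V^2 = K" using arg_cong[OF ZZ, of Re] by (simp add: power2_eq_square)
  have "V * L \<le> 0"
  proof (rule LIMSEQ_le_const2[OF lim])
    show "\<exists>N. \<forall>n\<ge>N. real n powr (3/2) * (sseq n * \<rho>^n) \<le> 0"
      using rp by (intro exI[of _ 1]) (auto simp: sseq_def mult_nonneg_nonpos2 intro!: mult_nonneg_nonpos)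
  qed
  moreover have "L < 0" by (simp add: L_def)
  ultimately have "V \<ge> 0" by (auto simp: mult_le_0_iff)
  then have VK: "V = sqrt K" using V2 real_sqrt_unique by metis
  define g where "g n = 1 / 4 * sqrt ((4 * \<rho> - real (k + 1) * 2 ^ (k + 1) * \<rho> ^ (k + 1)) / (pi * real n ^ 3))
          * (1 / \<rho>) ^ n" for n
  have "(\<lambda>n. (real n powr (3/2) * (sseq n * \<rho>^n)) * (-2 * sqrt pi / sqrt K)) \<longlonglongrightarrow> (V * L) * (-2 * sqrt pi / sqrt K)"
    by (intro tendsto_intros lim)
  moreover have "(V * L) * (-2 * sqrt pi / sqrt K) = 1" using Kpos by (simp add: VK L_def)
  moreover have "eventually (\<lambda>n. (real n powr (3/2) * (sseq n * \<rho>^n)) * (-2 * sqrt pi / sqrt K)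
      = real (f_count k n) / g n) sequentially"
  proof (rule eventually_sequentiallyI[of 1])
    fix n :: nat assume n: "1 \<le> n"
    then have np: "real n > 0" by simp
    have sq: "sqrt (real n ^ 3) = real n powr (3/2)"
    proof -
      have "sqrt (real n ^ 3) = (real n ^ 3) powr (1/2)" by (rule powr_half_sqrt[symmetric]) simp
      also have "real n ^ 3 = real n powr (real 3)" using powr_realpow[OF np, of 3] by simp
      also have "(real n powr (real 3)) powr (1/2) = real n powr (real 3 * (1/2))" by (rule powr_powr)
      finally show ?thesis by simp
    qed
    have sKpi: "sqrt (K / (pi * real n ^ 3)) = sqrt K / (sqrt pi * real n powr (3/2))"
      by (simp add: real_sqrt_divide real_sqrt_mult sq)
    have gn: "g n = 1 / 4 * (sqrt K / (sqrt pi * real n powr (3/2))) * (1 / \<rho>^n)"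
      unfolding g_def K_def[symmetric] sKpi by (simp add: power_one_over)
    have aux: "\<And>P sp sk rn f :: real. P > 0 \<Longrightarrow> sp > 0 \<Longrightarrow> sk > 0 \<Longrightarrow> rn > 0 \<Longrightarrow>
      (P * ((-2 * f) * rn)) * (-2 * sp / sk) = f / (1 / 4 * (sk / (sp * P)) * (1 / rn))"
      by (simp add: field_simps)
    have sn: "sseq n = - 2 * real (f_count k n)" using n by (simp add: sseq_def)
    show "(real n powr (3/2) * (sseq n * \<rho>^n)) * (-2 * sqrt pi / sqrt K)
      = real (f_count k n) / g n" unfolding gn sn by (rule aux) (use np rp Kpos in auto)
  qed
  ultimately have "(\<lambda>n. real (f_count k n) / g n) \<longlonglongrightarrow> 1"
    using Lim_transform_eventually by fastforce
  then have "(\<lambda>n. real (f_count k n)) \<sim>[at_top] g" by (rule asymp_equivI')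
  moreover have "g = (\<lambda>n. 1 / 4 * sqrt ((4 * \<rho> - real (k + 1) * 2 ^ (k + 1) * \<rho> ^ (k + 1)) / (pi * real n ^ 3))
          * (1 / \<rho>) ^ n)" by (rule ext) (simp only: g_def)
  ultimately show ?thesis by simp
qed

end
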